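(* Let $n\ge 1$, let $\mathcal M$ be a doubly stochastic $n\times n$ matrix and let $\kappa\le\frac{7n-4}{8n-4}$. Then there exists a directed $(2n-1)$-regular multigraph on $[n]$ whose weak direct throughput with respect to $\mathcal M$ is at least $\kappa$.
   Context: Let $n\ge 1$ and $[n]=\{1,\dots,n\}$. Networks are finite directed multigraphs on vertex set $[n]$; self-loops and parallel arcs are allowed. A directed multigraph is directed $r$-regular if every vertex has exactly $r$ outgoing and exactly $r$ incoming arcs (a self-loop at $v$ counts as one outgoing and one incoming arc of $v$). An $n\times n$ matrix is doubly stochastic if all entries are nonnegative and every row and every column sums to $1$. In a directed $(2n-1)$-regular multigraph $G$ on $[n]$ every arc has capacity $\frac{1}{2n-1}$. $G$ directly hosts a nonnegative $n\times n$ matrix $\mathcal M'=(a'_{i,j})$ if $a'_{u,v}\le \frac{m_{u,v}}{2n-1}$ for all $u,v\in[n]$, where $m_{u,v}$ is the number of arcs from $u$ to $v$ in $G$. The weak direct throughput of $G$ with respect to a doubly stochastic $\mathcal M=(a_{i,j})$ is the largest $\eta$ such that $G$ directly hosts some matrix $\mathcal M'=(a'_{i,j})$ with $0\le a'_{i,j}\le a_{i,j}$ for all $i,j$ and $\sum_{i,j}a'_{i,j}=\eta\sum_{i,j}a_{i,j}=\eta n$. *)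

theory Defs
  imports "HOL-Analysis.Analysis"
begin

(* Matrices over [n] = {1..n} are functions nat => nat => real, only entries with
   indices in {1..n} are relevant. A directed multigraph on [n] (self-loops and
   parallel arcs allowed) is represented by its arc-multiplicity function
   m :: nat => nat => nat, where m u v is the number of arcs from u to v;
   entries outside {1..n} are required to be 0. *)

definition doubly_stochastic :: "nat \<Rightarrow> (nat \<Rightarrow> nat \<Rightarrow> real) \<Rightarrow> bool" where
  "doubly_stochastic n a \<longleftrightarrow>
     (\<forall>i\<in>{1..n}. \<forall>j\<in>{1..n}. a i j \<ge> 0) \<and>
     (\<forall>i\<in>{1..n}. (\<Sum>j=1..n. a i j) = 1) \<and>
     (\<forall>j\<in>{1..n}. (\<Sum>i=1..n. a i j) = 1)"

definition multigraph_on :: "nat \<Rightarrow> (nat \<Rightarrow> nat \<Rightarrow> nat) \<Rightarrow> bool" where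
  "multigraph_on n m \<longleftrightarrow> (\<forall>u v. (u \<notin> {1..n} \<or> v \<notin> {1..n}) \<longrightarrow> m u v = 0)"

(* directed r-regular: every vertex has out-degree r and in-degree r
   (a self-loop at v contributes 1 to both) *)
definition directed_regular :: "nat \<Rightarrow> nat \<Rightarrow> (nat \<Rightarrow> nat \<Rightarrow> nat) \<Rightarrow> bool" where
  "directed_regular n r m \<longleftrightarrow> multigraph_on n m \<and>
     (\<forall>u\<in>{1..n}. (\<Sum>v=1..n. m u v) = r) \<and>
     (\<forall>v\<in>{1..n}. (\<Sum>u=1..n. m u v) = r)"

definition directly_hosts :: "nat \<Rightarrow> (nat \<Rightarrow> nat \<Rightarrow> nat) \<Rightarrow> (nat \<Rightarrow> nat \<Rightarrow> real) \<Rightarrow> bool" where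
  "directly_hosts n m a' \<longleftrightarrow>
     (\<forall>u\<in>{1..n}. \<forall>v\<in>{1..n}. a' u v \<le> real (m u v) / (2 * real n - 1))"

definition achievable_direct :: "nat \<Rightarrow> (nat \<Rightarrow> nat \<Rightarrow> nat) \<Rightarrow> (nat \<Rightarrow> nat \<Rightarrow> real) \<Rightarrow> real \<Rightarrow> bool" where
  "achievable_direct n m a \<eta> \<longleftrightarrow>
     (\<exists>a'. (\<forall>i\<in>{1..n}. \<forall>j\<in>{1..n}. 0 \<le> a' i j \<and> a' i j \<le> a i j) \<and>
           directly_hosts n m a' \<and>
           (\<Sum>i=1..n. \<Sum>j=1..n. a' i j) = \<eta> * (\<Sum>i=1..n. \<Sum>j=1..n. a i j))"

definition weak_direct_throughput :: "nat \<Rightarrow> (nat \<Rightarrow> nat \<Rightarrow> nat) \<Rightarrow> (nat \<Rightarrow> nat \<Rightarrow> real) \<Rightarrow> real" where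
  "weak_direct_throughput n m a = Sup {\<eta>. achievable_direct n m a \<eta>}"

end

theory Submission
  imports Defs
begin
lemma lin_kernel:
  fixes S :: "'a set" and Ls :: "('a \<Rightarrow> real) list"
  assumes "finite S" "length Ls < card S"
  shows "\<exists>d. (\<forall>s. s \<notin> S \<longrightarrow> d s = 0) \<and> (\<exists>s\<in>S. d s \<noteq> 0) \<and>
             (\<forall>l\<in>set Ls. (\<Sum>s\<in>S. l s * d s) = 0)"
  using assms
proof (induction "length Ls" arbitrary: Ls S rule: less_induct)
  case less
  show ?case
  proof (cases Ls)
  case Nil
  then obtain s0 where "s0 \<in> S" using less by fastforce
  then show ?thesis using Nil by (intro exI[of _ "\<lambda>s. if s = s0 then 1 else 0"]) auto
next
  case (Cons l Ls0)
  note CP = less.prems[unfolded Cons]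
  note lessIH = less.hyps[unfolded Cons]
  show ?thesis
  proof (cases "\<forall>s\<in>S. l s = 0")
    case True
    from CP have lc: "length Ls0 < card S" by simp
    have lt: "length Ls0 < length (l # Ls0)" by simp
    from lessIH[of Ls0, OF lt CP(1) lc] obtain d where d:
      "(\<forall>s. s \<notin> S \<longrightarrow> d s = 0)" "(\<exists>s\<in>S. d s \<noteq> 0)"
      "(\<forall>l\<in>set Ls0. (\<Sum>s\<in>S. l s * d s) = 0)" by blast
    show ?thesis using d True \<open>Ls = l # Ls0\<close> by (intro exI[of _ d]) simp
  next
    case False
    then obtain s0 where s0: "s0 \<in> S" "l s0 \<noteq> 0" by blast
    define S' where "S' = S - {s0}"
    define Ls' where "Ls' = map (\<lambda>k t. k t - k s0 * l t / l s0) Ls0"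
    have fin: "finite S'" using CP S'_def by simp
    have lc2: "length Ls' < card S'" using CP s0 unfolding S'_def Ls'_def by simp
    have lt2: "length Ls' < length (l # Ls0)" unfolding Ls'_def by simp
    from lessIH[of Ls' S', OF lt2 fin lc2] obtain d' where d':
      "(\<forall>s. s \<notin> S' \<longrightarrow> d' s = 0)" "(\<exists>s\<in>S'. d' s \<noteq> 0)"
      "(\<forall>k\<in>set Ls'. (\<Sum>s\<in>S'. k s * d' s) = 0)" by blast
    define d where "d = (\<lambda>s. if s = s0 then - (\<Sum>t\<in>S'. l t * d' t) / l s0 else d' s)"
    have split: "(\<Sum>s\<in>S. k s * d s) = k s0 * d s0 + (\<Sum>t\<in>S'. k t * d' t)" for k
    proof -
      have "(\<Sum>s\<in>S. k s * d s) = k s0 * d s0 + (\<Sum>t\<in>S'. k t * d t)"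
        unfolding S'_def using s0 CP(1) by (simp add: sum.remove)
      also have "(\<Sum>t\<in>S'. k t * d t) = (\<Sum>t\<in>S'. k t * d' t)"
        unfolding d_def S'_def by (intro sum.cong) auto
      finally show ?thesis .
    qed
    have A: "\<forall>s. s \<notin> S \<longrightarrow> d s = 0" using d'(1) s0 unfolding d_def S'_def by auto
    have B: "\<exists>s\<in>S. d s \<noteq> 0" using d'(2) unfolding d_def S'_def by auto
    have C: "(\<Sum>s\<in>S. k s * d s) = 0" if "k \<in> set (l # Ls0)" for k
    proof (cases "k = l")
      case True
      then show ?thesis using split[of l] s0 unfolding d_def by simp
    next
      case False
      then have k: "k \<in> set Ls0" using that by simp
      then have "(\<Sum>s\<in>S'. (k s - k s0 * l s / l s0) * d' s) = 0"
        using d'(3) unfolding Ls'_def by auto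
      then have "(\<Sum>s\<in>S'. k s * d' s) - k s0 / l s0 * (\<Sum>s\<in>S'. l s * d' s) = 0"
        by (simp add: algebra_simps sum_subtractf sum_distrib_left)
      then show ?thesis using split[of k] s0 unfolding d_def by (simp add: field_simps)
    qed
    show ?thesis using A B C \<open>Ls = l # Ls0\<close> by blast
  qed
  qed
qed

definition fracset :: "nat \<Rightarrow> (nat \<Rightarrow> nat \<Rightarrow> real) \<Rightarrow> (nat \<times> nat) set" where
  "fracset n w = {p \<in> {1..n}\<times>{1..n}. 0 < w (fst p) (snd p) \<and> w (fst p) (snd p) < 1}"

lemma fracset_finite: "finite (fracset n w)"
  unfolding fracset_def by (rule finite_subset[of _ "{1..n}\<times>{1..n}"]) auto

lemma frac_rows:
  assumes bnd: "\<forall>u\<in>{1..n}. \<forall>v\<in>{1..n}. 0 \<le> w u v \<and> w u v \<le> 1"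
    and rowint: "\<forall>u\<in>{1..n}. (\<Sum>v=1..n. w u v) \<in> \<int>"
  shows "2 * card (fst ` fracset n w) \<le> card (fracset n w)"
proof -
  define F where "F = fracset n w"
  define RT where "RT = fst ` F"
  define Fu where "Fu u = {v\<in>{1..n}. (u,v)\<in>F}" for u
  have FS: "F = Sigma RT Fu"
    unfolding RT_def Fu_def F_def fracset_def by (force simp: image_iff)
  have finRT: "finite RT" unfolding RT_def F_def using fracset_finite by simp
  have cardF: "card F = (\<Sum>u\<in>RT. card (Fu u))"
    unfolding FS by (rule card_SigmaI) (auto simp: finRT Fu_def)
  have ge2: "2 \<le> card (Fu u)" if uRT: "u \<in> RT" for u
  proof (rule ccontr)
    assume "\<not> 2 \<le> card (Fu u)"
    moreover have "Fu u \<noteq> {}" using uRT unfolding RT_def Fu_def F_def fracset_def by force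
    moreover have "finite (Fu u)" unfolding Fu_def by simp
    ultimately have "card (Fu u) = 1" by (metis One_nat_def card_0_eq less_2_cases not_le)
    then obtain v0 where v0: "Fu u = {v0}" by (rule card_1_singletonE)
    have v0F: "(u,v0) \<in> F" and v0n: "v0 \<in> {1..n}" using v0 unfolding Fu_def by auto
    have un: "u \<in> {1..n}" using v0F unfolding F_def fracset_def by auto
    have rest: "(\<Sum>v\<in>{1..n}-{v0}. w u v) \<in> \<int>"
    proof (rule Ints_sum)
      fix v assume v: "v \<in> {1..n}-{v0}"
      then have "(u,v) \<notin> F" using v0 unfolding Fu_def by auto
      then have "\<not> (0 < w u v \<and> w u v < 1)" using un v unfolding F_def fracset_def by auto
      moreover have "0 \<le> w u v \<and> w u v \<le> 1" using bnd un v by auto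
      ultimately have "w u v = 0 \<or> w u v = 1" by auto
      then show "w u v \<in> \<int>" by auto
    qed
    have "(\<Sum>v=1..n. w u v) = w u v0 + (\<Sum>v\<in>{1..n}-{v0}. w u v)"
      using v0n by (simp add: sum.remove)
    then have "w u v0 = (\<Sum>v=1..n. w u v) - (\<Sum>v\<in>{1..n}-{v0}. w u v)" by simp
    then have "w u v0 \<in> \<int>" using rest rowint un by (metis Ints_diff)
    moreover have "0 < w u v0" "w u v0 < 1" using v0F unfolding F_def fracset_def by auto
    ultimately show False by (auto elim!: Ints_cases)
  qed
  have "2 * card RT = (\<Sum>u\<in>RT. 2)" by simp
  also have "\<dots> \<le> (\<Sum>u\<in>RT. card (Fu u))" by (rule sum_mono) (use ge2 in auto)
  finally show ?thesis using cardF unfolding RT_def F_def by simp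
qed

lemma frac_kernel:
  assumes bnd: "\<forall>u\<in>{1..n}. \<forall>v\<in>{1..n}. 0 \<le> w u v \<and> w u v \<le> 1"
    and rowint: "\<forall>u\<in>{1..n}. (\<Sum>v=1..n. w u v) \<in> \<int>"
    and colint: "\<forall>v\<in>{1..n}. (\<Sum>u=1..n. w u v) \<in> \<int>"
    and ne: "fracset n w \<noteq> {}"
  shows "\<exists>d::nat\<Rightarrow>nat\<Rightarrow>real. (\<forall>u v. (u,v) \<notin> fracset n w \<longrightarrow> d u v = 0) \<and>
             (\<exists>p\<in>fracset n w. d (fst p) (snd p) \<noteq> 0) \<and>
             (\<forall>u\<in>{1..n}. (\<Sum>v=1..n. d u v) = 0) \<and> (\<forall>v\<in>{1..n}. (\<Sum>u=1..n. d u v) = 0)"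
proof -
  define F where "F = fracset n w"
  define RT where "RT = fst ` F"
  define CT where "CT = snd ` F"
  have finF: "finite F" unfolding F_def by (rule fracset_finite)
  have Fbox: "F \<subseteq> {1..n}\<times>{1..n}" unfolding F_def fracset_def by auto
  have r: "2 * card RT \<le> card F" unfolding RT_def F_def by (rule frac_rows[OF bnd rowint])
  define wT where "wT = (\<lambda>u v. w v u)"
  have FT: "fracset n wT = prod.swap ` F" unfolding F_def fracset_def wT_def by auto
  have "2 * card (fst ` fracset n wT) \<le> card (fracset n wT)"
    by (rule frac_rows) (use bnd colint in \<open>auto simp: wT_def\<close>)
  moreover have "card (fracset n wT) = card F" unfolding FT by (simp add: card_image)
  moreover have "fst ` fracset n wT = CT" unfolding FT CT_def by force
  ultimately have c: "2 * card CT \<le> card F" by simp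
  have "CT \<noteq> {}" using ne unfolding CT_def F_def by simp
  then obtain v0 where v0: "v0 \<in> CT" by blast
  have finCT: "finite CT" "finite RT" unfolding CT_def RT_def using finF by auto
  have v0n: "v0 \<in> {1..n}" using v0 Fbox unfolding CT_def by auto
  have cCT: "card (CT - {v0}) = card CT - 1" using v0 finCT by simp
  have "card CT \<ge> 1" using v0 finCT by (metis One_nat_def Suc_leI card_gt_0_iff empty_iff)
  define rowf where "rowf u = (\<lambda>p::nat\<times>nat. if fst p = u then (1::real) else 0)" for u
  define colf where "colf v = (\<lambda>p::nat\<times>nat. if snd p = v then (1::real) else 0)" for v
  define Ls where "Ls = map rowf (sorted_list_of_set RT) @ map colf (sorted_list_of_set (CT - {v0}))"
  have "length Ls < card F" unfolding Ls_def using r c cCT \<open>card CT \<ge> 1\<close> by simp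
  from lin_kernel[OF finF this] obtain dp where dp:
    "\<forall>s. s \<notin> F \<longrightarrow> dp s = 0" "\<exists>s\<in>F. dp s \<noteq> 0" "\<forall>l\<in>set Ls. (\<Sum>s\<in>F. l s * dp s) = 0"
    by blast
  define d where "d u v = dp (u,v)" for u v
  have boxsum: "(\<Sum>s\<in>F. f s * dp s) = (\<Sum>u=1..n. \<Sum>v=1..n. f (u,v) * d u v)" for f
  proof -
    have "(\<Sum>s\<in>F. f s * dp s) = (\<Sum>s\<in>{1..n}\<times>{1..n}. f s * dp s)"
      by (rule sum.mono_neutral_left) (use Fbox dp(1) in auto)
    also have "\<dots> = (\<Sum>u=1..n. \<Sum>v=1..n. f (u,v) * d u v)"
      unfolding d_def by (simp add: sum.cartesian_product)
    finally show ?thesis .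
  qed
  have rowsum: "(\<Sum>v=1..n. d u v) = (\<Sum>s\<in>F. rowf u s * dp s)" if "u \<in> {1..n}" for u
  proof -
    have "(\<Sum>u'=1..n. \<Sum>v=1..n. rowf u (u',v) * d u' v) = (\<Sum>u'=1..n. if u' = u then (\<Sum>v=1..n. d u v) else 0)"
      by (rule sum.cong) (auto simp: rowf_def)
    then show ?thesis unfolding boxsum using that by simp
  qed
  have colsum: "(\<Sum>u=1..n. d u v) = (\<Sum>s\<in>F. colf v s * dp s)" if "v \<in> {1..n}" for v
  proof -
    have "(\<Sum>u'=1..n. \<Sum>v'=1..n. colf v (u',v') * d u' v') = (\<Sum>u'=1..n. d u' v)"
    proof (rule sum.cong)
      fix u' assume "u' \<in> {1..n}"
      show "(\<Sum>v'=1..n. colf v (u',v') * d u' v') = d u' v"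
      proof -
        have "(\<Sum>v'=1..n. colf v (u',v') * d u' v') = (\<Sum>v'=1..n. if v' = v then d u' v' else 0)"
          by (rule sum.cong) (auto simp: colf_def)
        then show ?thesis using that by simp
      qed
    qed simp
    then show ?thesis unfolding boxsum by simp
  qed
  have R0: "(\<Sum>v=1..n. d u v) = 0" if "u \<in> {1..n}" for u
  proof (cases "u \<in> RT")
    case True
    then have "rowf u \<in> set Ls" unfolding Ls_def using finCT by simp
    then show ?thesis using rowsum[OF that] dp(3) by simp
  next
    case False
    then have "\<forall>s\<in>F. rowf u s = 0" unfolding RT_def rowf_def by force
    then show ?thesis using rowsum[OF that] by simp
  qed
  have C0': "(\<Sum>u=1..n. d u v) = 0" if "v \<in> {1..n}" "v \<noteq> v0" for v
  proof (cases "v \<in> CT")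
    case True
    then have "colf v \<in> set Ls" unfolding Ls_def using finCT that by simp
    then show ?thesis using colsum[OF that(1)] dp(3) by simp
  next
    case False
    then have "\<forall>s\<in>F. colf v s = 0" unfolding CT_def colf_def by force
    then show ?thesis using colsum[OF that(1)] by simp
  qed
  have "(\<Sum>v=1..n. \<Sum>u=1..n. d u v) = (\<Sum>u=1..n. \<Sum>v=1..n. d u v)" by (rule sum.swap)
  also have "\<dots> = 0" using R0 by simp
  finally have tot: "(\<Sum>v=1..n. \<Sum>u=1..n. d u v) = 0" .
  have "(\<Sum>v=1..n. \<Sum>u=1..n. d u v) = (\<Sum>u=1..n. d u v0) + (\<Sum>v\<in>{1..n}-{v0}. \<Sum>u=1..n. d u v)"
    by (rule sum.remove[OF finite_atLeastAtMost v0n])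
  also have "(\<Sum>v\<in>{1..n}-{v0}. \<Sum>u=1..n. d u v) = 0" using C0' by simp
  finally have "(\<Sum>u=1..n. d u v0) = 0" using tot by simp
  then have C0: "\<forall>v\<in>{1..n}. (\<Sum>u=1..n. d u v) = 0" using C0' by metis
  have NZ: "\<exists>p\<in>fracset n w. d (fst p) (snd p) \<noteq> 0" using dp(2) unfolding F_def d_def by auto
  have OUT: "\<forall>u v. (u,v) \<notin> fracset n w \<longrightarrow> d u v = 0" using dp(1) unfolding F_def d_def by auto
  show ?thesis using NZ OUT R0 C0 by (intro exI[of _ d]) blast
qed


lemma round01:
  fixes n :: nat and w g :: "nat \<Rightarrow> nat \<Rightarrow> real" and R C :: "nat \<Rightarrow> real"
  assumes "\<forall>u\<in>{1..n}. \<forall>v\<in>{1..n}. 0 \<le> w u v \<and> w u v \<le> 1"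
    and "\<forall>u\<in>{1..n}. (\<Sum>v=1..n. w u v) = R u" and "\<forall>v\<in>{1..n}. (\<Sum>u=1..n. w u v) = C v"
    and "\<forall>u\<in>{1..n}. R u \<in> \<int>" and "\<forall>v\<in>{1..n}. C v \<in> \<int>"
  shows "\<exists>y::nat\<Rightarrow>nat\<Rightarrow>real. (\<forall>u\<in>{1..n}. \<forall>v\<in>{1..n}. y u v = 0 \<or> y u v = 1) \<and>
     (\<forall>u\<in>{1..n}. (\<Sum>v=1..n. y u v) = R u) \<and> (\<forall>v\<in>{1..n}. (\<Sum>u=1..n. y u v) = C v) \<and>
     (\<Sum>u=1..n. \<Sum>v=1..n. g u v * w u v) \<le> (\<Sum>u=1..n. \<Sum>v=1..n. g u v * y u v)"
  using assms
proof (induction "card (fracset n w)" arbitrary: w rule: less_induct)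
  case less
  note bnd = less.prems(1) and rs = less.prems(2) and cs = less.prems(3)
  show ?case
  proof (cases "fracset n w = {}")
    case True
    have "\<forall>u\<in>{1..n}. \<forall>v\<in>{1..n}. w u v = 0 \<or> w u v = 1"
    proof (intro ballI)
      fix u v assume uv: "u \<in> {1..n}" "v \<in> {1..n}"
      then have "\<not> (0 < w u v \<and> w u v < 1)" using True unfolding fracset_def by auto
      then show "w u v = 0 \<or> w u v = 1" using bnd uv by force
    qed
    then show ?thesis using rs cs by (intro exI[of _ w]) auto
  next
    case False
    define F where "F = fracset n w"
    have rowint: "\<forall>u\<in>{1..n}. (\<Sum>v=1..n. w u v) \<in> \<int>" using rs less.prems(4) by simp
    have colint: "\<forall>v\<in>{1..n}. (\<Sum>u=1..n. w u v) \<in> \<int>" using cs less.prems(5) by simp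
    from frac_kernel[OF bnd rowint colint False] obtain d :: "nat\<Rightarrow>nat\<Rightarrow>real" where d:
      "\<forall>u v. (u,v) \<notin> fracset n w \<longrightarrow> d u v = 0"
      "\<exists>p\<in>fracset n w. d (fst p) (snd p) \<noteq> 0"
      "\<forall>u\<in>{1..n}. (\<Sum>v=1..n. d u v) = 0" "\<forall>v\<in>{1..n}. (\<Sum>u=1..n. d u v) = 0"
      by blast
    define G where "G = (\<Sum>u=1..n. \<Sum>v=1..n. g u v * d u v)"
    define e where "e = (\<lambda>u v. if G \<ge> 0 then d u v else - d u v)"
    have e1: "\<forall>u v. (u,v) \<notin> F \<longrightarrow> e u v = 0" using d(1) unfolding e_def F_def by simp
    have e2: "\<exists>p\<in>F. e (fst p) (snd p) \<noteq> 0" using d(2) unfolding e_def F_def by simp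
    have e3: "\<forall>u\<in>{1..n}. (\<Sum>v=1..n. e u v) = 0" using d(3) unfolding e_def by (cases "G \<ge> 0") (simp_all add: sum_negf)
    have e4: "\<forall>v\<in>{1..n}. (\<Sum>u=1..n. e u v) = 0" using d(4) unfolding e_def by (cases "G \<ge> 0") (simp_all add: sum_negf)
    have e5: "0 \<le> (\<Sum>u=1..n. \<Sum>v=1..n. g u v * e u v)"
    proof (cases "G \<ge> 0")
      case True then show ?thesis unfolding e_def G_def by simp
    next
      case False then show ?thesis unfolding e_def using False unfolding G_def by (simp add: sum_negf)
    qed
    define P where "P = {p\<in>F. e (fst p) (snd p) \<noteq> 0}"
    define c where "c p = (if e (fst p) (snd p) > 0 then (1 - w (fst p) (snd p)) / e (fst p) (snd p)
                           else w (fst p) (snd p) / (- e (fst p) (snd p)))" for p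
    have finP: "finite P" unfolding P_def F_def using fracset_finite by simp
    have neP: "P \<noteq> {}" using e2 unfolding P_def by blast
    have FP: "p \<in> F \<Longrightarrow> 0 < w (fst p) (snd p) \<and> w (fst p) (snd p) < 1 \<and> p \<in> {1..n}\<times>{1..n}" for p
      unfolding F_def fracset_def by auto
    have cpos: "c p > 0" if "p \<in> P" for p
      using FP[of p] that unfolding P_def c_def by (auto simp: field_simps)
    define t where "t = Min (c ` P)"
    have "t \<in> c ` P" unfolding t_def using finP neP by simp
    then obtain p0 where p0: "p0 \<in> P" "t = c p0" by blast
    have tle: "t \<le> c p" if "p \<in> P" for p unfolding t_def using finP that by simp
    have tpos: "t > 0" using cpos p0 by simp
    define w' where "w' = (\<lambda>u v. w u v + t * e u v)"
    have bnd': "\<forall>u\<in>{1..n}. \<forall>v\<in>{1..n}. 0 \<le> w' u v \<and> w' u v \<le> 1"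
    proof (intro ballI)
      fix u v assume uv: "u \<in> {1..n}" "v \<in> {1..n}"
      show "0 \<le> w' u v \<and> w' u v \<le> 1"
      proof (cases "(u,v) \<in> P")
        case True
        have tl: "t \<le> c (u,v)" using tle[OF True] .
        have wb: "0 < w u v" "w u v < 1" using FP[of "(u,v)"] True unfolding P_def by auto
        show ?thesis
        proof (cases "e u v > 0")
          case True
          have "t * e u v \<le> c (u,v) * e u v" using tl True by (intro mult_right_mono) auto
          also have "c (u,v) * e u v = 1 - w u v" using True unfolding c_def by simp
          finally show ?thesis unfolding w'_def using True tpos wb
            by (auto intro: add_nonneg_nonneg simp: zero_le_mult_iff)
        next
          case False
          then have en: "e u v < 0" using True unfolding P_def by auto
          have "c (u,v) * e u v \<le> t * e u v" using tl en by (intro mult_right_mono_neg) auto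
          moreover have "c (u,v) * e u v = - w u v" using en unfolding c_def by simp
          moreover have "t * e u v \<le> 0" using tpos en by (simp add: mult_pos_neg less_imp_le)
          ultimately show ?thesis unfolding w'_def using wb by linarith
        qed
      next
        case False
        then have "e u v = 0" using e1 unfolding P_def by auto
        then show ?thesis unfolding w'_def using bnd uv by simp
      qed
    qed
    have rs': "\<forall>u\<in>{1..n}. (\<Sum>v=1..n. w' u v) = R u"
      using rs e3 unfolding w'_def by (simp add: sum.distrib sum_distrib_left[symmetric])
    have cs': "\<forall>v\<in>{1..n}. (\<Sum>u=1..n. w' u v) = C v"
      using cs e4 unfolding w'_def by (simp add: sum.distrib sum_distrib_left[symmetric])
    have obj: "(\<Sum>u=1..n. \<Sum>v=1..n. g u v * w' u v) =
        (\<Sum>u=1..n. \<Sum>v=1..n. g u v * w u v) + t * (\<Sum>u=1..n. \<Sum>v=1..n. g u v * e u v)"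
      unfolding w'_def by (simp add: algebra_simps sum.distrib sum_distrib_left)
    have objle: "(\<Sum>u=1..n. \<Sum>v=1..n. g u v * w u v) \<le> (\<Sum>u=1..n. \<Sum>v=1..n. g u v * w' u v)"
      unfolding obj using tpos e5 by simp
    have p0val: "w' (fst p0) (snd p0) = 0 \<or> w' (fst p0) (snd p0) = 1"
    proof -
      have ne: "e (fst p0) (snd p0) \<noteq> 0" using p0 unfolding P_def by auto
      show ?thesis
      proof (cases "e (fst p0) (snd p0) > 0")
        case True then show ?thesis unfolding w'_def p0(2) c_def by simp
      next
        case False then show ?thesis unfolding w'_def p0(2) c_def using ne by simp
      qed
    qed
    have sub: "fracset n w' \<subseteq> F - {p0}"
    proof
      fix p assume p: "p \<in> fracset n w'"
      then have pb: "p \<in> {1..n}\<times>{1..n}" "0 < w' (fst p) (snd p)" "w' (fst p) (snd p) < 1"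
        unfolding fracset_def by auto
      have "p \<in> F"
      proof (cases "e (fst p) (snd p) = 0")
        case True
        then show ?thesis using pb unfolding w'_def F_def fracset_def by auto
      next
        case False
        then show ?thesis using e1 by (metis prod.collapse)
      qed
      moreover have "p \<noteq> p0" using p0val pb by auto
      ultimately show "p \<in> F - {p0}" by simp
    qed
    have "p0 \<in> F" using p0 unfolding P_def by simp
    then have "card (fracset n w') < card F"
    proof -
      have "fracset n w' \<subset> F" using sub \<open>p0 \<in> F\<close> by blast
      moreover have "finite F" unfolding F_def by (rule fracset_finite)
      ultimately show ?thesis by (rule psubset_card_mono[rotated])
    qed
    from less.hyps[OF this[unfolded F_def] bnd' rs' cs' less.prems(4) less.prems(5)]
    obtain y :: "nat\<Rightarrow>nat\<Rightarrow>real" where y: "(\<forall>u\<in>{1..n}. \<forall>v\<in>{1..n}. y u v = 0 \<or> y u v = 1)"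
     "(\<forall>u\<in>{1..n}. (\<Sum>v=1..n. y u v) = R u)" "(\<forall>v\<in>{1..n}. (\<Sum>u=1..n. y u v) = C v)"
     "(\<Sum>u=1..n. \<Sum>v=1..n. g u v * w' u v) \<le> (\<Sum>u=1..n. \<Sum>v=1..n. g u v * y u v)"
      by blast
    show ?thesis using y objle by (intro exI[of _ y]) auto
  qed
qed


theorem theorem4p3:
  fixes n :: nat and a :: "nat \<Rightarrow> nat \<Rightarrow> real" and \<kappa> :: real
  assumes "n \<ge> 1"
    and "doubly_stochastic n a"
    and "\<kappa> \<le> (7 * real n - 4) / (8 * real n - 4)"
  shows "\<exists>m. directed_regular n (2 * n - 1) m \<and> weak_direct_throughput n m a \<ge> \<kappa>"
proof -
  have n1: "n \<ge> 1" by fact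
  have apos: "\<forall>i\<in>{1..n}. \<forall>j\<in>{1..n}. a i j \<ge> 0" and arow: "\<forall>i\<in>{1..n}. (\<Sum>j=1..n. a i j) = 1"
    and acol: "\<forall>j\<in>{1..n}. (\<Sum>i=1..n. a i j) = 1"
    using assms(2) unfolding doubly_stochastic_def by auto
  define N where "N = 2 * n - 1"
  define Nr where "Nr = 2 * real n - 1"
  have NNr: "real N = Nr" unfolding N_def Nr_def using n1 by (simp add: of_nat_diff)
  have Nrpos: "Nr \<ge> 1" unfolding Nr_def using n1 by simp
  define b where "b u v = Nr * a u v" for u v
  define lo where "lo u v = \<lfloor>b u v\<rfloor>" for u v
  define x where "x u v = b u v - of_int (lo u v)" for u v
  have xb: "0 \<le> x u v \<and> x u v < 1" for u v
    unfolding x_def lo_def using floor_correct[of "b u v"] by linarith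
  have lo0: "lo u v \<ge> 0" if "u \<in> {1..n}" "v \<in> {1..n}" for u v
    unfolding lo_def b_def using apos that Nrpos by simp
  have brow: "(\<Sum>v=1..n. b u v) = Nr" if "u \<in> {1..n}" for u
    unfolding b_def using arow that by (simp add: sum_distrib_left[symmetric])
  have bcol: "(\<Sum>u=1..n. b u v) = Nr" if "v \<in> {1..n}" for v
    unfolding b_def using acol that by (simp add: sum_distrib_left[symmetric])
  have NrI: "Nr \<in> \<int>" using NNr by (metis Ints_of_nat)
  have xrow: "(\<Sum>v=1..n. x u v) = Nr - (\<Sum>v=1..n. of_int (lo u v))" if "u \<in> {1..n}" for u
    unfolding x_def using brow[OF that] by (simp add: sum_subtractf)
  have xcol: "(\<Sum>u=1..n. x u v) = Nr - (\<Sum>u=1..n. of_int (lo u v))" if "v \<in> {1..n}" for v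
    unfolding x_def using bcol[OF that] by (simp add: sum_subtractf)
  have RI: "\<forall>u\<in>{1..n}. (\<Sum>v=1..n. x u v) \<in> \<int>"
    using xrow NrI by (simp add: Ints_diff Ints_sum)
  have CI: "\<forall>v\<in>{1..n}. (\<Sum>u=1..n. x u v) \<in> \<int>"
    using xcol NrI by (simp add: Ints_diff Ints_sum)
  have xbnd: "\<forall>u\<in>{1..n}. \<forall>v\<in>{1..n}. 0 \<le> x u v \<and> x u v \<le> 1" using xb by (simp add: less_imp_le)
  from round01[where w=x and g=x and R="\<lambda>u. \<Sum>v=1..n. x u v" and C="\<lambda>v. \<Sum>u=1..n. x u v", OF xbnd _ _ RI CI]
  obtain y :: "nat \<Rightarrow> nat \<Rightarrow> real" where y:
    "\<forall>u\<in>{1..n}. \<forall>v\<in>{1..n}. y u v = 0 \<or> y u v = 1"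
    "\<forall>u\<in>{1..n}. (\<Sum>v=1..n. y u v) = (\<Sum>v=1..n. x u v)"
    "\<forall>v\<in>{1..n}. (\<Sum>u=1..n. y u v) = (\<Sum>u=1..n. x u v)"
    "(\<Sum>u=1..n. \<Sum>v=1..n. x u v * x u v) \<le> (\<Sum>u=1..n. \<Sum>v=1..n. x u v * y u v)"
    by auto
  define m where "m u v = (if u \<in> {1..n} \<and> v \<in> {1..n} then nat (lo u v) + (if y u v = 1 then 1 else 0) else 0)" for u v
  have mreal: "real (m u v) = of_int (lo u v) + y u v" if "u \<in> {1..n}" "v \<in> {1..n}" for u v
  proof -
    have "y u v = 0 \<or> y u v = 1" using y(1) that by blast
    then show ?thesis using that lo0[OF that] unfolding m_def by auto
  qed
  have mrow: "(\<Sum>v=1..n. m u v) = N" if "u \<in> {1..n}" for u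
  proof -
    have "real (\<Sum>v=1..n. m u v) = (\<Sum>v=1..n. of_int (lo u v) + y u v)"
      using mreal that by simp
    also have "\<dots> = (\<Sum>v=1..n. of_int (lo u v)) + (\<Sum>v=1..n. x u v)"
      using y(2) that by (simp add: sum.distrib)
    also have "\<dots> = real N" using xrow[OF that] NNr by simp
    finally show ?thesis by (simp only: of_nat_eq_iff)
  qed
  have mcol: "(\<Sum>u=1..n. m u v) = N" if "v \<in> {1..n}" for v
  proof -
    have "real (\<Sum>u=1..n. m u v) = (\<Sum>u=1..n. of_int (lo u v) + y u v)"
      using mreal that by simp
    also have "\<dots> = (\<Sum>u=1..n. of_int (lo u v)) + (\<Sum>u=1..n. x u v)"
      using y(3) that by (simp add: sum.distrib)
    also have "\<dots> = real N" using xcol[OF that] NNr by simp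
    finally show ?thesis by (simp only: of_nat_eq_iff)
  qed
  have reg: "directed_regular n (2 * n - 1) m"
    unfolding directed_regular_def multigraph_on_def using mrow mcol unfolding N_def
    by (auto simp: m_def)
  define a' where "a' u v = min (a u v) (real (m u v) / Nr)" for u v
  have key: "of_int (lo u v) + x u v * y u v \<le> Nr * a' u v" if uv: "u \<in> {1..n}" "v \<in> {1..n}" for u v
  proof -
    have "Nr * a' u v = min (b u v) (real (m u v))"
      unfolding a'_def b_def using Nrpos by (simp add: min_mult_distrib_left)
    moreover have "b u v = of_int (lo u v) + x u v" unfolding x_def by simp
    moreover note xb[of u v] mreal[OF uv]
    moreover have "y u v = 0 \<or> y u v = 1" using y(1) uv by blast
    ultimately show ?thesis by (elim disjE) auto
  qed
  define S where "S = (\<Sum>u=1..n. \<Sum>v=1..n. a' u v)"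
  have "(\<Sum>u=1..n. \<Sum>v=1..n. of_int (lo u v) + x u v * y u v) \<le> (\<Sum>u=1..n. \<Sum>v=1..n. Nr * a' u v)"
    using key by (intro sum_mono) auto
  also have "\<dots> = Nr * S" unfolding S_def by (simp add: sum_distrib_left)
  finally have s1: "(\<Sum>u=1..n. \<Sum>v=1..n. of_int (lo u v)) + (\<Sum>u=1..n. \<Sum>v=1..n. x u v * y u v) \<le> Nr * S"
    by (simp add: sum.distrib)
  have "(\<Sum>u=1..n. \<Sum>v=1..n. b u v) = (\<Sum>u=1..n. Nr)" using brow by simp
  then have btot: "(\<Sum>u=1..n. \<Sum>v=1..n. b u v) = real n * Nr" by simp
  have "(\<Sum>u=1..n. \<Sum>v=1..n. x u v - x u v * x u v) \<le> (\<Sum>u=1..n. \<Sum>v=1..n. (1/4::real))"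
  proof (intro sum_mono)
    fix u v
    have "0 \<le> (x u v - 1/2)^2" by simp
    then show "x u v - x u v * x u v \<le> 1/4" by (simp add: power2_eq_square algebra_simps)
  qed
  then have q: "(\<Sum>u=1..n. \<Sum>v=1..n. x u v - x u v * x u v) \<le> real n * real n / 4" by simp
  have decomp: "(\<Sum>u=1..n. \<Sum>v=1..n. b u v) = (\<Sum>u=1..n. \<Sum>v=1..n. of_int (lo u v)) +
       (\<Sum>u=1..n. \<Sum>v=1..n. x u v * x u v) + (\<Sum>u=1..n. \<Sum>v=1..n. x u v - x u v * x u v)"
    unfolding x_def by (simp add: sum.distrib[symmetric])
  have NS: "real n * Nr - real n * real n / 4 \<le> Nr * S" using s1 y(4) q decomp btot by linarith
  have npos: "real n > 0" using n1 by simp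
  define \<eta> where "\<eta> = S / real n"
  have atot: "(\<Sum>i=1..n. \<Sum>j=1..n. a i j) = real n" using arow by simp
  have ach: "achievable_direct n m a \<eta>"
    unfolding achievable_direct_def
  proof (intro exI[of _ a'] conjI)
    show "\<forall>i\<in>{1..n}. \<forall>j\<in>{1..n}. 0 \<le> a' i j \<and> a' i j \<le> a i j"
      using apos Nrpos unfolding a'_def by auto
    show "directly_hosts n m a'" unfolding directly_hosts_def a'_def Nr_def by simp
    show "(\<Sum>i=1..n. \<Sum>j=1..n. a' i j) = \<eta> * (\<Sum>i=1..n. \<Sum>j=1..n. a i j)"
      unfolding atot \<eta>_def S_def using npos by simp
  qed
  have bdd: "bdd_above {\<eta>. achievable_direct n m a \<eta>}"
  proof (rule bdd_aboveI)
    fix e assume "e \<in> {\<eta>. achievable_direct n m a \<eta>}"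
    then obtain a'' where a'': "\<forall>i\<in>{1..n}. \<forall>j\<in>{1..n}. 0 \<le> a'' i j \<and> a'' i j \<le> a i j"
      "(\<Sum>i=1..n. \<Sum>j=1..n. a'' i j) = e * (\<Sum>i=1..n. \<Sum>j=1..n. a i j)"
      unfolding achievable_direct_def by blast
    have "(\<Sum>i=1..n. \<Sum>j=1..n. a'' i j) \<le> (\<Sum>i=1..n. \<Sum>j=1..n. a i j)"
      using a''(1) by (intro sum_mono) auto
    then have "e * real n \<le> 1 * real n" using a''(2) atot by simp
    then show "e \<le> 1" using npos by simp
  qed
  have etaSup: "\<eta> \<le> weak_direct_throughput n m a"
    unfolding weak_direct_throughput_def using ach bdd by (intro cSup_upper) auto
  have "(7 * real n - 4) / (8 * real n - 4) \<le> \<eta>"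
  proof -
    have d: "8 * real n - 4 > 0" using n1 by simp
    have "(7 * real n - 4) * real n \<le> S * (8 * real n - 4)"
      using NS unfolding Nr_def by (simp add: algebra_simps)
    then show ?thesis unfolding \<eta>_def using d npos by (simp add: divide_le_eq le_divide_eq mult.commute)
  qed
  then have "\<kappa> \<le> weak_direct_throughput n m a" using assms(3) etaSup by linarith
  then show ?thesis using reg by blast
qed

end
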